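(* Every Tychonoff space $X$ of countable pseudocharacter is a nowhere almost $P$-space.
   Context: $C(X)$ is the ring of real-valued continuous functions on $X$; a cozero set is a set $\{x: h(x)\neq 0\}$ with $h\in C(X)$. $T''(X)$ is the set of all functions $f\colon X\to\mathbb{R}$ for which there is a dense cozero set $U$ of $X$ with $f|_U$ continuous. $\chi_A$ is the characteristic function of $A$. $X$ is a nowhere almost $P$-space if $\chi_{\{p\}}\in T''(X)$ for all $p\in X$. $X$ has countable pseudocharacter if every singleton is a $G_\delta$-set. *)

theory Defs
  imports "HOL-Analysis.Analysis"
begin

definition tychonoff_space :: "'a topology \<Rightarrow> bool" where
  "tychonoff_space X \<longleftrightarrow> completely_regular_space X \<and> Hausdorff_space X"

definition cozero_set :: "'a topology \<Rightarrow> ('a \<Rightarrow> real) \<Rightarrow> 'a set" where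
  "cozero_set X h = {x \<in> topspace X. h x \<noteq> 0}"

definition is_cozero_set :: "'a topology \<Rightarrow> 'a set \<Rightarrow> bool" where
  "is_cozero_set X U \<longleftrightarrow> (\<exists>h. continuous_map X euclideanreal h \<and> U = cozero_set X h)"

text \<open>T''(X): functions continuous on some dense cozero set
  (only values on topspace X matter).\<close>
definition T2prime :: "'a topology \<Rightarrow> ('a \<Rightarrow> real) set" where
  "T2prime X = {f. \<exists>U. is_cozero_set X U \<and> X closure_of U = topspace X \<and>
                      continuous_map (subtopology X U) euclideanreal f}"

definition nowhere_almost_P_space :: "'a topology \<Rightarrow> bool" where
  "nowhere_almost_P_space X \<longleftrightarrow>
     (\<forall>p \<in> topspace X. (\<lambda>x. if x = p then 1 else 0) \<in> T2prime X)"

definition countable_pseudocharacter :: "'a topology \<Rightarrow> bool" where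
  "countable_pseudocharacter X \<longleftrightarrow> (\<forall>p \<in> topspace X. gdelta_in X {p})"

end

theory Submission
  imports Defs
begin

theorem proposition4p1:
  fixes X :: "'a topology"
  assumes "tychonoff_space X" and "countable_pseudocharacter X"
  shows "nowhere_almost_P_space X"
  unfolding nowhere_almost_P_space_def
proof
  fix p assume p: "p \<in> topspace X"
  have cr: "completely_regular_space X" and hs: "Hausdorff_space X"
    using assms(1) by (auto simp: tychonoff_space_def)
  have gd: "gdelta_in X {p}" using assms(2) p by (auto simp: countable_pseudocharacter_def)
  let ?chi = "(\<lambda>x. if x = p then 1 else 0) :: 'a \<Rightarrow> real"
  show "?chi \<in> T2prime X"
  proof (cases "openin X {p}")
    case True
    have cl: "closedin X {p}"
      using hs p by (meson Hausdorff_imp_t1_space closedin_t1_singleton)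
    have "continuous_map X euclideanreal ?chi"
      unfolding continuous_map_def
    proof (intro conjI allI impI)
      fix U :: "real set" assume "openin euclideanreal U"
      have eq: "{x \<in> topspace X. ?chi x \<in> U} = (if 1 \<in> U then {p} else {}) \<union> (if 0 \<in> U then topspace X - {p} else {})"
        using p by auto
      show "openin X {x \<in> topspace X. ?chi x \<in> U}"
        unfolding eq using True cl p by (auto simp: insert_absorb)
    qed auto
    moreover have "is_cozero_set X (topspace X)"
      unfolding is_cozero_set_def cozero_set_def
      by (rule exI[where x="\<lambda>x. 1"]) auto
    ultimately show ?thesis unfolding T2prime_def
      by (intro CollectI exI[where x="topspace X"]) (auto simp: subtopology_topspace)
  next
    case False
    obtain \<U> where cU: "countable \<U>" and oU: "\<And>V. V \<in> \<U> \<Longrightarrow> openin X V" and IU: "\<Inter>\<U> = {p}"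
      using gd unfolding gdelta_in_alt intersection_of_def by auto
    have ne: "\<U> \<noteq> {}"
    proof
      assume "\<U> = {}"
      then have "(UNIV::'a set) = {p}" using IU by simp
      then have "topspace X = {p}" using p by auto
      then show False using False by (metis openin_topspace)
    qed
    define V where "V n = from_nat_into \<U> n" for n
    have oV: "openin X (V n)" for n using oU ne by (simp add: V_def from_nat_into)
    have IV: "(\<Inter>n. V n) = {p}"
      using IU cU ne unfolding V_def by (metis range_from_nat_into)
    have "\<exists>f::'a\<Rightarrow>real. continuous_map X (top_of_set {0..1::real}) f \<and> f p = 0 \<and> f ` (topspace X - V n) \<subseteq> {1}" for n
    proof -
      have "p \<in> V n" using IV by auto
      have "closedin X (topspace X - V n)" using oV[of n] by blast
      moreover have "p \<in> topspace X - (topspace X - V n)" using p \<open>p \<in> V n\<close> by blast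
      ultimately show ?thesis using cr unfolding completely_regular_space_def by blast
    qed
    then obtain f :: "nat \<Rightarrow> 'a \<Rightarrow> real" where fc: "\<And>n. continuous_map X (top_of_set {0..1::real}) (f n)"
      and fp: "\<And>n. f n p = 0" and f1: "\<And>n. f n ` (topspace X - V n) \<subseteq> {1}"
      by metis
    have fce: "continuous_map X euclideanreal (f n)" for n
      using fc[of n] by (simp add: continuous_map_in_subtopology)
    have f01: "x \<in> topspace X \<Longrightarrow> 0 \<le> f n x \<and> f n x \<le> 1" for n x
      using fc[of n] by (auto simp: continuous_map_in_subtopology image_subset_iff)
    define g where "g x = (\<Sum>n. (1/2)^n * f n x)" for x
    have summ: "summable (\<lambda>n. (1/2::real)^n * f n x)" if "x \<in> topspace X" for x
    proof (rule summable_comparison_test[where g="\<lambda>n. (1/2::real)^n"])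
      show "\<exists>N. \<forall>n\<ge>N. norm ((1/2::real)^n * f n x) \<le> (1/2)^n"
        using f01[OF that] by (auto simp: abs_mult intro!: mult_left_le)
      show "summable (\<lambda>n. (1/2::real)^n)" by (rule summable_geometric) simp
    qed
    have gcont: "continuous_map X euclideanreal g"
    proof -
      have "continuous_map X Met_TC.mtopology g"
      proof (rule Met_TC.continuous_map_uniform_limit[where F=sequentially and f="\<lambda>N x. \<Sum>n<N. (1/2)^n * f n x"])
        show "\<forall>\<^sub>F N in sequentially. continuous_map X Met_TC.mtopology (\<lambda>x. \<Sum>n<N. (1/2)^n * f n x)"
        proof -
          have "continuous_map X euclideanreal (\<lambda>x. \<Sum>n<N. (1/2) ^ n * f n x)" for N
            by (rule continuous_map_sum) (auto intro: continuous_map_real_mult_left fce)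
          then show ?thesis by simp
        qed
        show "\<not> trivial_limit (sequentially :: nat filter)" by simp
        fix e :: real assume "0 < e"
        obtain N where N: "(1/2::real)^N < e/2"
          using real_arch_pow_inv[of "e/2" "1/2"] \<open>0 < e\<close> by auto
        show "\<forall>\<^sub>F M in sequentially. \<forall>x\<in>topspace X. g x \<in> UNIV \<and> dist (\<Sum>n<M. (1/2)^n * f n x) (g x) < e"
          unfolding eventually_sequentially
        proof (intro exI[where x=N] allI impI ballI conjI)
          fix M x assume M: "N \<le> M" and x: "x \<in> topspace X"
          show "g x \<in> UNIV" by simp
          have "g x - (\<Sum>n<M. (1/2)^n * f n x) = (\<Sum>n. (1/2)^(n+M) * f (n+M) x)"
            unfolding g_def using suminf_split_initial_segment[OF summ[OF x], of M] by simp
          also have "\<dots> \<le> (\<Sum>n. (1/2::real)^(n+M))"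
          proof (rule suminf_le)
            show "summable (\<lambda>n. (1/2::real)^(n+M) * f (n+M) x)"
              using summable_ignore_initial_segment[OF summ[OF x], of M] by simp
            show "summable (\<lambda>n. (1/2::real)^(n+M))"
              by (simp add: power_add summable_geometric summable_mult2)
            show "\<And>n. (1/2::real)^(n+M) * f (n+M) x \<le> (1/2)^(n+M)"
              using f01[OF x] by (auto intro!: mult_left_le)
          qed
          also have "\<dots> = 2 * (1/2)^M"
          proof -
            have "(\<Sum>n. (1/2::real)^(n+M)) = (\<Sum>n. (1/2::real)^n * (1/2)^M)"
              by (simp only: power_add)
            also have "\<dots> = (\<Sum>n. (1/2::real)^n) * (1/2)^M"
              by (rule suminf_mult2[symmetric]) (rule summable_geometric, simp)
            also have "(\<Sum>n. (1/2::real)^n) = 2"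
              using suminf_geometric[of "1/2::real"] by simp
            finally show ?thesis by simp
          qed
          finally have le: "g x - (\<Sum>n<M. (1/2)^n * f n x) \<le> 2 * (1/2)^M" .
          have ge: "0 \<le> g x - (\<Sum>n<M. (1/2)^n * f n x)"
          proof -
            have "(\<Sum>n<M. (1/2::real)^n * f n x) \<le> g x"
              unfolding g_def using summ[OF x] f01[OF x]
              by (intro sum_le_suminf) auto
            then show ?thesis by simp
          qed
          have "(1/2::real)^M \<le> (1/2)^N" using M by (simp add: power_decreasing)
          show "dist (\<Sum>n<M. (1/2)^n * f n x) (g x) < e"
            using le ge N \<open>(1/2::real)^M \<le> (1/2)^N\<close> \<open>0 < e\<close>
            unfolding dist_real_def by linarith
        qed
      qed
      then show ?thesis by simp
    qed
    have gp: "g p = 0" unfolding g_def by (simp add: fp)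
    have gpos: "g x \<noteq> 0" if x: "x \<in> topspace X" and xp: "x \<noteq> p" for x
    proof -
      obtain n where n: "x \<notin> V n" using IV xp by auto
      have fn1: "f n x = 1" using f1[of n] x n by auto
      have "0 < g x" unfolding g_def
      proof (rule suminf_pos2[where i=n])
        show "summable (\<lambda>n. (1/2::real)^n * f n x)" using summ[OF x] .
        show "0 \<le> (1/2::real)^m * f m x" for m using f01[OF x, of m] by simp
        show "0 < (1/2::real)^n * f n x" using fn1 by simp
      qed
      then show ?thesis by simp
    qed
    have coz: "cozero_set X g = topspace X - {p}"
      unfolding cozero_set_def using gp gpos by auto
    have dense: "X closure_of (topspace X - {p}) = topspace X"
    proof -
      have "X interior_of {p} = {}"
        using False interior_of_subset[of X "{p}"] openin_interior_of[of X "{p}"]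
        by (metis subset_singleton_iff)
      then show ?thesis by (simp add: closure_of_complement)
    qed
    have "continuous_map (subtopology X (topspace X - {p})) euclideanreal ?chi"
      by (rule continuous_map_eq[where f="\<lambda>x. 0"]) auto
    moreover have "is_cozero_set X (topspace X - {p})"
      unfolding is_cozero_set_def using gcont coz by metis
    ultimately show ?thesis using dense unfolding T2prime_def by blast
  qed
qed

end
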